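(* For every field $K$ and every integer $n\geq 1$, $\mathrm{card}(\widetilde{K}_n)\leq (n+1)^{n^2+n+1}$. Consequently $\widetilde{K}$ is countable.
   Context: Let $K$ be a field. For $r\in K$, a finite set $A(r)$ with $\{r\}\subseteq A(r)\subseteq K$ is called adequate for $r$ if every mapping $f:A(r)\to K$ satisfying (1) if $1\in A(r)$ then $f(1)=1$; (2) if $a,b\in A(r)$ and $a+b\in A(r)$ then $f(a+b)=f(a)+f(b)$; (3) if $a,b\in A(r)$ and $a\cdot b\in A(r)$ then $f(a\cdot b)=f(a)\cdot f(b)$, also satisfies $f(r)=r$. $\widetilde{K}$ denotes the set of all $r\in K$ for which some finite set adequate for $r$ exists. For $n\ge1$, $\widetilde{K}_n$ denotes the set of all $r\in K$ for which there exists a set $A(r)$ adequate for $r$ with $\mathrm{card}(A(r))\leq n$; thus $\widetilde{K}=\bigcup_{n\ge1}\widetilde{K}_n$. *)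

theory Defs
  imports Main "HOL-Library.Countable_Set"
begin

text \<open>Maps A \<rightarrow> K are represented by total functions whose values outside A
  are irrelevant.\<close>
definition adequate :: "'a::field \<Rightarrow> 'a set \<Rightarrow> bool" where
  "adequate r A \<longleftrightarrow> finite A \<and> r \<in> A \<and>
     (\<forall>f :: 'a \<Rightarrow> 'a.
        ((1 \<in> A \<longrightarrow> f 1 = 1) \<and>
         (\<forall>a\<in>A. \<forall>b\<in>A. a + b \<in> A \<longrightarrow> f (a + b) = f a + f b) \<and>
         (\<forall>a\<in>A. \<forall>b\<in>A. a * b \<in> A \<longrightarrow> f (a * b) = f a * f b))
        \<longrightarrow> f r = r)"

definition Ktilde :: "'a::field set" where
  "Ktilde = {r. \<exists>A. adequate r A}"

definition Ktilde_n :: "nat \<Rightarrow> 'a::field set" where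
  "Ktilde_n n = {r. \<exists>A. adequate r A \<and> card A \<le> n}"

end

theory Submission
  imports Defs "HOL-Library.FuncSet"
begin

definition lv :: "'a set \<Rightarrow> (nat \<Rightarrow> 'a) \<Rightarrow> 'a \<Rightarrow> nat" where
  "lv A e y = (if y \<in> A then Suc (inv_into {..<card A} e y) else 0)"

definition DD :: "nat \<Rightarrow> (nat \<times> nat) set" where
  "DD n = ({..<n} \<times> {..n}) \<union> {(n,0)}"

definition code :: "nat \<Rightarrow> 'a::field set \<Rightarrow> (nat \<Rightarrow> 'a) \<Rightarrow> nat \<times> nat \<Rightarrow> nat" where
  "code n A e = (\<lambda>(i,c). if (i,c) \<in> DD n then
     (if i = n then lv A e 1
      else if i < c then lv A e (e i + e (c - 1))
      else lv A e (e c * e i)) else undefined)"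

lemma lv_Suc:
  assumes "bij_betw e {..<card A} A" "lv A e y = Suc l"
  shows "y \<in> A \<and> e l = y"
proof -
  have y: "y \<in> A" using assms(2) unfolding lv_def by (auto split: if_splits)
  then have "l = inv_into {..<card A} e y" using assms(2) unfolding lv_def by auto
  then show ?thesis using y assms(1) by (simp add: bij_betw_inv_into_right)
qed

lemma lv_in:
  assumes "bij_betw e {..<card A} A" "y \<in> A"
  shows "lv A e y = Suc (inv_into {..<card A} e y) \<and> inv_into {..<card A} e y < card A
     \<and> e (inv_into {..<card A} e y) = y"
  using assms unfolding lv_def
  by (auto simp: bij_betw_inv_into_right bij_betw_def inv_into_into[of y e "{..<card A}", simplified])

lemma lv_le:
  assumes "bij_betw e {..<card A} A"
  shows "lv A e y \<le> card A"
  using lv_in[OF assms, of y] by (cases "y \<in> A") (auto simp: lv_def)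

lemma key:
  fixes e e' :: "nat \<Rightarrow> 'a::field"
  assumes ad: "adequate r A" and be: "bij_betw e {..<card A} A" and e0: "e 0 = r"
    and cA: "card A \<le> n"
    and be': "bij_betw e' {..<card B} B"
    and eq: "code n A e = code n B e'"
  shows "r = e' 0"
proof -
  let ?idx = "inv_into {..<card A} e"
  define f where "f = (\<lambda>x. e' (?idx x))"
  have eqp: "code n A e p = code n B e' p" for p using eq by simp
  have one: "f 1 = 1" if "1 \<in> A"
  proof -
    have "code n A e (n,0) = lv A e 1" by (simp add: code_def DD_def)
    moreover have "code n B e' (n,0) = lv B e' 1" by (simp add: code_def DD_def)
    ultimately have "lv B e' 1 = Suc (?idx 1)" using lv_in[OF be that] eqp[of "(n,0)"] by simp
    from lv_Suc[OF be' this] show ?thesis by (simp add: f_def)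
  qed
  have addc: "f (a + b) = f a + f b" if "a \<in> A" "b \<in> A" "a + b \<in> A" "?idx a \<le> ?idx b" for a b
  proof -
    let ?j = "?idx a" and ?k = "?idx b"
    have ja: "?j < card A" "e ?j = a" using lv_in[OF be that(1)] by auto
    have kb: "?k < card A" "e ?k = b" using lv_in[OF be that(2)] by auto
    have inD: "(?j, Suc ?k) \<in> DD n" using ja kb cA by (auto simp: DD_def)
    have "code n A e (?j, Suc ?k) = lv A e (e ?j + e ?k)"
      using inD ja kb cA that(4) by (simp add: code_def)
    moreover have "code n B e' (?j, Suc ?k) = lv B e' (e' ?j + e' ?k)"
      using inD ja kb cA that(4) by (simp add: code_def)
    ultimately have "lv B e' (e' ?j + e' ?k) = Suc (?idx (a+b))"
      using lv_in[OF be that(3)] eqp[of "(?j, Suc ?k)"] ja kb by simp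
    from lv_Suc[OF be' this] show ?thesis by (simp add: f_def)
  qed
  have add: "f (a + b) = f a + f b" if "a \<in> A" "b \<in> A" "a + b \<in> A" for a b
  proof (cases "?idx a \<le> ?idx b")
    case True then show ?thesis using addc that by blast
  next
    case False then show ?thesis using addc[of b a] that by (simp add: add.commute)
  qed
  have mulc: "f (a * b) = f a * f b" if "a \<in> A" "b \<in> A" "a * b \<in> A" "?idx a \<le> ?idx b" for a b
  proof -
    let ?j = "?idx a" and ?k = "?idx b"
    have ja: "?j < card A" "e ?j = a" using lv_in[OF be that(1)] by auto
    have kb: "?k < card A" "e ?k = b" using lv_in[OF be that(2)] by auto
    have inD: "(?k, ?j) \<in> DD n" using ja kb cA by (auto simp: DD_def)
    have "code n A e (?k, ?j) = lv A e (e ?j * e ?k)"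
      using inD ja kb cA that(4) by (simp add: code_def)
    moreover have "code n B e' (?k, ?j) = lv B e' (e' ?j * e' ?k)"
      using inD ja kb cA that(4) by (simp add: code_def)
    ultimately have "lv B e' (e' ?j * e' ?k) = Suc (?idx (a*b))"
      using lv_in[OF be that(3)] eqp[of "(?k, ?j)"] ja kb by simp
    from lv_Suc[OF be' this] show ?thesis by (simp add: f_def)
  qed
  have mul: "f (a * b) = f a * f b" if "a \<in> A" "b \<in> A" "a * b \<in> A" for a b
  proof (cases "?idx a \<le> ?idx b")
    case True then show ?thesis using mulc that by blast
  next
    case False then show ?thesis using mulc[of b a] that by (simp add: mult.commute)
  qed
  have "f r = r" using ad one add mul unfolding adequate_def by blast
  moreover have "?idx r = 0"
  proof -
    have "0 < card A" using ad unfolding adequate_def by (auto simp: card_gt_0_iff)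
    then show ?thesis using be e0 by (metis bij_betw_def inv_into_f_f lessThan_iff)
  qed
  ultimately show ?thesis by (simp add: f_def)
qed

lemma exists_enum:
  assumes "finite A" "r \<in> A"
  shows "\<exists>e. bij_betw e {..<card A} A \<and> e 0 = r"
proof -
  obtain xs where xs: "set xs = A - {r}" "distinct xs"
    using finite_distinct_list[of "A - {r}"] assms by auto
  have d: "distinct (r # xs)" using xs by auto
  have s: "set (r # xs) = A" using xs assms by auto
  have "card A = length (r # xs)" using d s distinct_card by fastforce
  then have "bij_betw ((!) (r # xs)) {..<card A} A" using bij_betw_nth[OF d refl s[symmetric]] by simp
  then show ?thesis by (intro exI[of _ "(!) (r # xs)"]) simp
qed

lemma card_DD: "card (DD n) = n\<^sup>2 + n + 1"
proof -
  have "card ({..<n} \<times> {..n}) = n * (n+1)" by (simp add: card_cartesian_product)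
  moreover have "(n,0) \<notin> {..<n} \<times> {..n}" by auto
  ultimately show ?thesis unfolding DD_def by (simp add: power2_eq_square algebra_simps)
qed

lemma finite_DD: "finite (DD n)" by (simp add: DD_def)

lemma main_bound:
  assumes "n \<ge> 1"
  shows "finite (Ktilde_n n :: 'a::field set) \<and> card (Ktilde_n n :: 'a set) \<le> (n + 1) ^ (n\<^sup>2 + n + 1)"
proof -
  define SA where "SA = (\<lambda>r::'a. SOME A. adequate r A \<and> card A \<le> n)"
  define SE where "SE = (\<lambda>r::'a. SOME e. bij_betw e {..<card (SA r)} (SA r) \<and> e 0 = r)"
  define F where "F = (\<lambda>r. code n (SA r) (SE r))"
  have props: "adequate r (SA r) \<and> card (SA r) \<le> n \<and> bij_betw (SE r) {..<card (SA r)} (SA r) \<and> SE r 0 = r"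
    if "r \<in> Ktilde_n n" for r
  proof -
    have a: "adequate r (SA r) \<and> card (SA r) \<le> n"
    proof -
      have "\<exists>A. adequate r A \<and> card A \<le> n" using that unfolding Ktilde_n_def by simp
      then show ?thesis unfolding SA_def by (rule someI_ex)
    qed
    then have "\<exists>e. bij_betw e {..<card (SA r)} (SA r) \<and> e 0 = r"
      by (intro exists_enum) (auto simp: adequate_def)
    then have "bij_betw (SE r) {..<card (SA r)} (SA r) \<and> SE r 0 = r"
      unfolding SE_def by (rule someI_ex)
    with a show ?thesis by blast
  qed
  have inj: "inj_on F (Ktilde_n n)"
  proof (rule inj_onI)
    fix r s assume r: "r \<in> Ktilde_n n" and s: "s \<in> Ktilde_n n" and "F r = F s"
    then have "r = SE s 0" using key[of r "SA r" "SE r" n "SE s" "SA s"] props[OF r] props[OF s]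
      by (simp add: F_def)
    then show "r = s" using props[OF s] by simp
  qed
  have img: "F ` Ktilde_n n \<subseteq> (\<Pi>\<^sub>E p\<in>DD n. {0..n})"
  proof
    fix y assume "y \<in> F ` Ktilde_n n"
    then obtain r where r: "r \<in> Ktilde_n n" and y: "y = F r" by auto
    have le: "lv (SA r) (SE r) z \<le> n" for z using lv_le[of "SE r" "SA r" z] props[OF r] by simp
    show "y \<in> (\<Pi>\<^sub>E p\<in>DD n. {0..n})"
      unfolding y F_def using le by (auto simp: code_def)
  qed
  have fin: "finite (\<Pi>\<^sub>E p\<in>DD n. {0..n})" by (simp add: finite_PiE finite_DD)
  have cp: "card (\<Pi>\<^sub>E p\<in>DD n. {0..n}) = (n+1) ^ (n\<^sup>2 + n + 1)"
    by (simp add: card_PiE finite_DD card_DD)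
  have "finite (Ktilde_n n :: 'a set)"
    using inj img fin by (metis finite_imageD finite_subset)
  moreover have "card (Ktilde_n n :: 'a set) \<le> (n + 1) ^ (n\<^sup>2 + n + 1)"
    using card_inj_on_le[OF inj img fin] cp by simp
  ultimately show ?thesis by blast
qed

theorem theorem2:
  shows "(\<forall>n::nat. n \<ge> 1 \<longrightarrow>
            finite (Ktilde_n n :: 'a::field set) \<and>
            card (Ktilde_n n :: 'a set) \<le> (n + 1) ^ (n\<^sup>2 + n + 1))
         \<and> countable (Ktilde :: 'a set)"
proof
  show "\<forall>n::nat. n \<ge> 1 \<longrightarrow> finite (Ktilde_n n :: 'a::field set) \<and>
            card (Ktilde_n n :: 'a set) \<le> (n + 1) ^ (n\<^sup>2 + n + 1)"
    using main_bound by blast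
  have "(Ktilde :: 'a set) \<subseteq> (\<Union>n. Ktilde_n (Suc n))"
    unfolding Ktilde_def Ktilde_n_def by (auto intro: le_SucI)
  moreover have "countable (\<Union>n. (Ktilde_n (Suc n) :: 'a set))"
    using main_bound[of "Suc _"] by (intro countable_UN) (auto intro: countable_finite)
  ultimately show "countable (Ktilde :: 'a set)" by (rule countable_subset)
qed

end
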